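(* Let $A\in\mathbb{R}^{m\times n}$ and let $N\subseteq[n]$ be such that the submatrix $A_{[n]\setminus N}$ has full column rank. Then for every $z\in\ker(A)$, $\|z\|_\infty\le\kappa_A\|z_N\|_1$.
   Context: $A_S$ denotes the submatrix of $A$ formed by the columns in $S$, and $z_N$ the restriction of $z$ to coordinates in $N$. An elementary vector of $\ker(A)$ is a nonzero $g\in\ker(A)$ with inclusion-minimal support among nonzero vectors of $\ker(A)$. The circuit imbalance is $\kappa_A=\max\{|g_i|/|g_j|: g \text{ elementary},\ i,j\in\mathrm{supp}(g)\}$. *)

theory Defs
  imports "HOL-Analysis.Analysis"
begin

definition supp_vec :: "real^'n \<Rightarrow> 'n set" where
  "supp_vec g = {i. g $ i \<noteq> 0}"

definition elementary_vec :: "real^'n^'m \<Rightarrow> real^'n \<Rightarrow> bool" where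
  "elementary_vec A g \<longleftrightarrow> g \<noteq> 0 \<and> A *v g = 0 \<and>
     (\<forall>h. h \<noteq> 0 \<and> A *v h = 0 \<and> supp_vec h \<subseteq> supp_vec g \<longrightarrow> supp_vec h = supp_vec g)"

definition circuit_imbalance :: "real^'n^'m \<Rightarrow> real" where
  "circuit_imbalance A =
     (let R = {\<bar>g $ i\<bar> / \<bar>g $ j\<bar> | g i j. elementary_vec A g \<and> i \<in> supp_vec g \<and> j \<in> supp_vec g}
      in if R = {} then 0 else Sup R)"

definition full_col_rank_on :: "real^'n^'m \<Rightarrow> 'n set \<Rightarrow> bool" where
  "full_col_rank_on A S \<longleftrightarrow>
     (\<forall>c :: 'n \<Rightarrow> real. (\<Sum>j\<in>S. c j *\<^sub>R column j A) = 0 \<longrightarrow> (\<forall>j\<in>S. c j = 0))"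

end

theory Submission
  imports Defs
begin

lemma kernel_meets_N:
  fixes A :: "real^'n^'m" and h :: "real^'n"
  assumes "full_col_rank_on A (UNIV - N)" "A *v h = 0" "h \<noteq> 0"
  shows "\<exists>j\<in>N. h $ j \<noteq> 0"
proof (rule ccontr)
  assume "\<not> ?thesis"
  hence hN: "\<forall>j\<in>N. h $ j = 0" by auto
  have "0 = (\<Sum>i\<in>UNIV. h $ i *\<^sub>R column i A)"
    using assms(2) by (simp add: matrix_mult_sum scalar_mult_eq_scaleR)
  also have "\<dots> = (\<Sum>i\<in>UNIV - N. h $ i *\<^sub>R column i A)"
    by (rule sum.mono_neutral_right) (use hN in auto)
  finally have "\<forall>j\<in>UNIV - N. h $ j = 0"
    using assms(1) unfolding full_col_rank_on_def by metis
  with hN have "h = 0" by (auto simp: vec_eq_iff)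
  with assms(3) show False by simp
qed

lemma elem_prop:
  fixes A :: "real^'n^'m"
  assumes g: "elementary_vec A g" and g': "elementary_vec A g'" and s: "supp_vec g = supp_vec g'"
  shows "\<exists>c. g = c *\<^sub>R g'"
proof -
  from g obtain k where k: "g $ k \<noteq> 0" unfolding elementary_vec_def by (auto simp: vec_eq_iff)
  with s have k': "g' $ k \<noteq> 0" by (auto simp: supp_vec_def)
  define h where "h = g - (g $ k / g' $ k) *\<^sub>R g'"
  have Ah: "A *v h = 0" using g g' unfolding h_def elementary_vec_def
    by (simp add: matrix_vector_mult_diff_distrib matrix_vector_mult_scaleR)
  have sub: "supp_vec h \<subseteq> supp_vec g"
  proof
    fix j assume "j \<in> supp_vec h"
    hence "h $ j \<noteq> 0" unfolding supp_vec_def by simp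
    hence "g $ j \<noteq> 0 \<or> g' $ j \<noteq> 0" unfolding h_def by force
    thus "j \<in> supp_vec g" using s unfolding supp_vec_def by blast
  qed
  have "k \<notin> supp_vec h" using k' unfolding h_def supp_vec_def by simp
  moreover have "k \<in> supp_vec g" using k by (simp add: supp_vec_def)
  ultimately have "h = 0" using g Ah sub unfolding elementary_vec_def by blast
  thus ?thesis unfolding h_def by auto
qed

lemma ratio_finite:
  fixes A :: "real^'n^'m"
  shows "finite {\<bar>g $ i\<bar> / \<bar>g $ j\<bar> | g i j. elementary_vec A g \<and> i \<in> supp_vec g \<and> j \<in> supp_vec g}"
    (is "finite ?R")
proof -
  define rep where "rep S = (SOME g. elementary_vec A g \<and> supp_vec g = S)" for S
  have "?R \<subseteq> (\<lambda>(S,i,j). \<bar>rep S $ i\<bar> / \<bar>rep S $ j\<bar>) ` UNIV"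
  proof
    fix x assume "x \<in> ?R"
    then obtain g i j where x: "x = \<bar>g $ i\<bar> / \<bar>g $ j\<bar>" and g: "elementary_vec A g" by blast
    have r: "elementary_vec A (rep (supp_vec g)) \<and> supp_vec (rep (supp_vec g)) = supp_vec g"
      unfolding rep_def by (rule someI[of _ g]) (use g in auto)
    then obtain c where c: "g = c *\<^sub>R rep (supp_vec g)" using elem_prop[OF g] by metis
    have "c \<noteq> 0" using g c unfolding elementary_vec_def by auto
    have gi: "g $ i = c * rep (supp_vec g) $ i" "g $ j = c * rep (supp_vec g) $ j"
      by (subst c, simp)+
    have xr: "x = \<bar>rep (supp_vec g) $ i\<bar> / \<bar>rep (supp_vec g) $ j\<bar>"
      unfolding x gi abs_mult using \<open>c \<noteq> 0\<close> by simp
    show "x \<in> (\<lambda>(S,i,j). \<bar>rep S $ i\<bar> / \<bar>rep S $ j\<bar>) ` UNIV"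
      by (rule image_eqI[where x="(supp_vec g, i, j)"]) (simp_all add: xr)
  qed
  thus ?thesis by (rule finite_subset) simp
qed

lemma kappa_bound:
  fixes A :: "real^'n^'m"
  assumes g: "elementary_vec A g" and i: "g $ i \<noteq> 0" and j: "g $ j \<noteq> 0"
  shows "\<bar>g $ i\<bar> \<le> circuit_imbalance A * \<bar>g $ j\<bar>"
proof -
  let ?R = "{\<bar>g $ i\<bar> / \<bar>g $ j\<bar> | g i j. elementary_vec A g \<and> i \<in> supp_vec g \<and> j \<in> supp_vec g}"
  have mem: "\<bar>g $ i\<bar> / \<bar>g $ j\<bar> \<in> ?R" using g i j unfolding supp_vec_def by blast
  hence ne: "?R \<noteq> {}" by blast
  have "circuit_imbalance A = Sup ?R" unfolding circuit_imbalance_def Let_def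
    by (rule if_not_P[OF ne])
  moreover have "\<bar>g $ i\<bar> / \<bar>g $ j\<bar> \<le> Sup ?R"
    by (rule cSup_upper[OF mem]) (rule bdd_above_finite[OF ratio_finite])
  ultimately show ?thesis using j by (simp add: divide_le_eq mult.commute)
qed

lemma conformal_elem:
  fixes A :: "real^'n^'m" and z :: "real^'n"
  assumes Az: "A *v z = 0" and z0: "z \<noteq> 0"
  shows "\<exists>g. elementary_vec A g \<and> (\<forall>j. g $ j \<noteq> 0 \<longrightarrow> 0 < z $ j * g $ j)"
proof -
  define P where "P h \<longleftrightarrow> h \<noteq> 0 \<and> A *v h = 0 \<and> (\<forall>j. h $ j \<noteq> 0 \<longrightarrow> 0 < z $ j * h $ j)" for h
  have "P z" unfolding P_def using Az z0 by (simp add: zero_less_mult_iff linorder_neq_iff)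
  then obtain h where Ph: "P h" and hmin: "\<And>y. P y \<Longrightarrow> card (supp_vec h) \<le> card (supp_vec y)"
    using ex_has_least_nat[of P z "\<lambda>h. card (supp_vec h)"] by blast
  have h0: "h \<noteq> 0" and Ah: "A *v h = 0" and hz: "\<And>j. h $ j \<noteq> 0 \<Longrightarrow> 0 < z $ j * h $ j"
    using Ph unfolding P_def by auto
  have "elementary_vec A h"
    unfolding elementary_vec_def
  proof (intro conjI h0 Ah allI impI)
    fix h' :: "real^'n"
    assume a: "h' \<noteq> 0 \<and> A *v h' = 0 \<and> supp_vec h' \<subseteq> supp_vec h"
    show "supp_vec h' = supp_vec h"
    proof (rule ccontr)
      assume ne: "supp_vec h' \<noteq> supp_vec h"
      with a have ps: "supp_vec h' \<subset> supp_vec h" by blast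
      then obtain k where k: "h $ k \<noteq> 0" "h' $ k = 0" unfolding supp_vec_def by blast
      from a obtain j1 where j1: "h' $ j1 \<noteq> 0" by (auto simp: vec_eq_iff)
      with a have hj1: "h $ j1 \<noteq> 0" unfolding supp_vec_def by blast
      define h2 where "h2 = (if 0 < h' $ j1 * h $ j1 then h' else - h')"
      have neg: "A *v (- h') = - (A *v h')"
        by (metis diff_0 matrix_vector_mult_diff_distrib matrix_vector_mult_0_right)
      have Ah2: "A *v h2 = 0" using a unfolding h2_def by (simp add: neg)
      have h2h: "\<And>j. h $ j = 0 \<Longrightarrow> h2 $ j = 0" using a unfolding h2_def supp_vec_def by auto
      have h2k: "h2 $ k = 0" using k unfolding h2_def by auto
      have "h' $ j1 * h $ j1 \<noteq> 0" using j1 hj1 by simp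
      have j1J: "0 < h2 $ j1 * h $ j1"
      proof (cases "0 < h' $ j1 * h $ j1")
        case True thus ?thesis unfolding h2_def by simp
      next
        case False
        with \<open>h' $ j1 * h $ j1 \<noteq> 0\<close> have "h' $ j1 * h $ j1 < 0" by linarith
        with False show ?thesis unfolding h2_def by simp
      qed
      define J where "J = {j. 0 < h2 $ j * h $ j}"
      have finJ: "finite J" by simp
      have j1J': "j1 \<in> J" using j1J unfolding J_def by simp
      define t where "t = Min ((\<lambda>j. h $ j / h2 $ j) ` J)"
      have "t \<in> (\<lambda>j. h $ j / h2 $ j) ` J" unfolding t_def
        by (rule Min_in) (use finJ j1J' in blast)+
      then obtain j0 where j0: "j0 \<in> J" "t = h $ j0 / h2 $ j0" by blast
      have tle: "\<And>j. j \<in> J \<Longrightarrow> t \<le> h $ j / h2 $ j" unfolding t_def using finJ by simp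
      have tpos: "0 < t" using j0 unfolding J_def
        by (simp add: zero_less_divide_iff zero_less_mult_iff) blast
      define h3 where "h3 = h - t *\<^sub>R h2"
      have Ah3: "A *v h3 = 0" using Ah Ah2 unfolding h3_def
        by (simp add: matrix_vector_mult_diff_distrib matrix_vector_mult_scaleR)
      have h3z: "\<And>j. h $ j = 0 \<Longrightarrow> h3 $ j = 0" using h2h unfolding h3_def by simp
      have h3nn: "0 \<le> h3 $ j * h $ j" if hj: "h $ j \<noteq> 0" for j
      proof -
        have eq: "h3 $ j * h $ j = h $ j * h $ j - t * (h2 $ j * h $ j)"
          unfolding h3_def by (simp add: algebra_simps)
        show ?thesis
      proof (cases "j \<in> J")
        case True
        hence p: "0 < h2 $ j * h $ j" unfolding J_def by simp
        hence h2j: "h2 $ j \<noteq> 0" by auto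
        have "t * (h2 $ j * h $ j) \<le> (h $ j / h2 $ j) * (h2 $ j * h $ j)"
          using tle[OF True] p by (intro mult_right_mono) simp_all
        also have "\<dots> = h $ j * h $ j" using h2j by simp
        finally show ?thesis using eq by linarith
      next
        case False
        hence p: "h2 $ j * h $ j \<le> 0" unfolding J_def by simp
        have "0 \<le> - t * (h2 $ j * h $ j)" using p tpos by (simp add: mult_nonneg_nonpos)
        moreover have "0 \<le> h $ j * h $ j" by simp
        ultimately show ?thesis using eq by linarith
      qed
      qed
      have "P h3" unfolding P_def
      proof (intro conjI Ah3 allI impI)
        have "h3 $ k \<noteq> 0" using k h2k unfolding h3_def by simp
        thus "h3 \<noteq> 0" by auto
      next
        fix j assume h3j: "h3 $ j \<noteq> 0"
        hence hj: "h $ j \<noteq> 0" using h3z by blast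
        have a1: "0 < z $ j * h $ j" using hz[OF hj] .
        have "h3 $ j * h $ j \<noteq> 0" using h3j hj by simp
        hence a2: "0 < h3 $ j * h $ j" using h3nn[OF hj] by linarith
        show "0 < z $ j * h3 $ j"
        proof -
          have "0 < (z $ j * h $ j) * (h3 $ j * h $ j)" using a1 a2 by (rule mult_pos_pos)
          hence "0 < (z $ j * h3 $ j) * (h $ j * h $ j)" by (simp add: algebra_simps)
          moreover have "0 < h $ j * h $ j" using hj by (metis linorder_neq_iff mult_neg_neg mult_pos_pos)
          ultimately show ?thesis by (rule zero_less_mult_pos2)
        qed
      qed
      have "supp_vec h3 \<subseteq> supp_vec h" using h3z unfolding supp_vec_def by blast
      moreover have "j0 \<in> supp_vec h" using j0(1) unfolding J_def supp_vec_def by fastforce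
      moreover have "h2 $ j0 \<noteq> 0" using j0(1) unfolding J_def by fastforce
      hence "h3 $ j0 = 0" unfolding h3_def using j0(2) by simp
      hence "j0 \<notin> supp_vec h3" unfolding supp_vec_def by simp
      ultimately have "supp_vec h3 \<subset> supp_vec h" by blast
      hence "card (supp_vec h3) < card (supp_vec h)" by (rule psubset_card_mono[rotated]) simp
      with hmin[OF \<open>P h3\<close>] show False by simp
    qed
  qed
  thus ?thesis using hz by blast
qed

theorem lemma2p6:
  fixes A :: "real^'n^'m" and N :: "'n set" and z :: "real^'n"
  assumes "full_col_rank_on A (UNIV - N)"
    and "A *v z = 0"
  shows "(MAX i. \<bar>z $ i\<bar>) \<le> circuit_imbalance A * (\<Sum>i\<in>N. \<bar>z $ i\<bar>)"
proof -
  let ?k = "circuit_imbalance A"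
  have main: "\<forall>z :: real^'n. A *v z = 0 \<longrightarrow> card (supp_vec z) = n \<longrightarrow>
      (\<forall>i. \<bar>z $ i\<bar> \<le> ?k * (\<Sum>j\<in>N. \<bar>z $ j\<bar>))" for n
  proof (induction n rule: less_induct)
    case (less n)
    show ?case
    proof (intro allI impI)
      fix z :: "real^'n" and i
      assume Az: "A *v z = 0" and cz: "card (supp_vec z) = n"
      show "\<bar>z $ i\<bar> \<le> ?k * (\<Sum>j\<in>N. \<bar>z $ j\<bar>)"
      proof (cases "z = 0")
        case True thus ?thesis by simp
      next
        case False
        obtain g where g: "elementary_vec A g" and gc: "\<And>j. g $ j \<noteq> 0 \<Longrightarrow> 0 < z $ j * g $ j"
          using conformal_elem[OF Az False] by blast
        have g0: "g \<noteq> 0" and Ag: "A *v g = 0" using g unfolding elementary_vec_def by auto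
        define S where "S = supp_vec g"
        obtain j1 where j1: "g $ j1 \<noteq> 0" using g0 by (auto simp: vec_eq_iff)
        have finS: "finite S" by simp
        have j1S: "j1 \<in> S" using j1 unfolding S_def supp_vec_def by simp
        define t where "t = Min ((\<lambda>j. z $ j / g $ j) ` S)"
        have "t \<in> (\<lambda>j. z $ j / g $ j) ` S" unfolding t_def
          by (rule Min_in) (use finS j1S in blast)+
        then obtain j0 where j0: "j0 \<in> S" "t = z $ j0 / g $ j0" by blast
        have tle: "\<And>j. j \<in> S \<Longrightarrow> t \<le> z $ j / g $ j" unfolding t_def using finS by simp
        have gj0: "g $ j0 \<noteq> 0" using j0(1) unfolding S_def supp_vec_def by simp
        have "0 < z $ j0 * g $ j0" using gc[OF gj0] .
        hence tpos: "0 < t" unfolding j0(2)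
          by (simp add: zero_less_divide_iff zero_less_mult_iff)
        define z' where "z' = z - t *\<^sub>R g"
        have Az': "A *v z' = 0" using Az Ag unfolding z'_def
          by (simp add: matrix_vector_mult_diff_distrib matrix_vector_mult_scaleR)
        have abs_eq: "\<bar>z $ j\<bar> = \<bar>z' $ j\<bar> + t * \<bar>g $ j\<bar>" for j
        proof (cases "g $ j = 0")
          case True thus ?thesis unfolding z'_def by simp
        next
          case False
          have p: "0 < z $ j * g $ j" using gc[OF False] .
          have tl: "t \<le> z $ j / g $ j" using tle False unfolding S_def supp_vec_def by simp
          have z'j: "z' $ j = z $ j - t * g $ j" unfolding z'_def by simp
          show ?thesis
          proof (cases "0 < g $ j")
            case True
            hence zp: "0 < z $ j" using p by (simp add: zero_less_mult_iff)
            have "t * g $ j \<le> z $ j" using tl True by (simp add: le_divide_eq)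
            thus ?thesis using zp True tpos z'j by simp
          next
            case False2: False
            hence gn: "g $ j < 0" using False by linarith
            hence zn: "z $ j < 0" using p by (simp add: zero_less_mult_iff)
            have "z $ j \<le> t * g $ j" using tl gn by (simp add: le_divide_eq)
            moreover have "t * g $ j < 0" using tpos gn by (simp add: mult_pos_neg)
            ultimately show ?thesis using zn gn z'j by simp
          qed
        qed
        have zsub: "supp_vec z' \<subseteq> supp_vec z"
        proof
          fix j assume "j \<in> supp_vec z'"
          hence "z' $ j \<noteq> 0" unfolding supp_vec_def by simp
          moreover have "z $ j = 0 \<Longrightarrow> z' $ j = 0"
          proof -
            assume zj: "z $ j = 0"
            hence "g $ j = 0" using gc by fastforce
            thus "z' $ j = 0" using zj unfolding z'_def by simp
          qed
          ultimately show "j \<in> supp_vec z" unfolding supp_vec_def by blast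
        qed
        have "z' $ j0 = 0" unfolding z'_def using j0(2) gj0 by simp
        moreover have "z $ j0 \<noteq> 0" using gc[OF gj0] by auto
        ultimately have "supp_vec z' \<subset> supp_vec z" using zsub unfolding supp_vec_def by blast
        hence "card (supp_vec z') < n" unfolding cz[symmetric]
          by (rule psubset_card_mono[rotated]) simp
        hence IH: "\<bar>z' $ i\<bar> \<le> ?k * (\<Sum>j\<in>N. \<bar>z' $ j\<bar>)"
          using less.IH Az' by blast
        obtain jN where jN: "jN \<in> N" "g $ jN \<noteq> 0"
          using kernel_meets_N[OF assms(1) Ag g0] by blast
        have "\<bar>g $ jN\<bar> \<le> ?k * \<bar>g $ jN\<bar>" using kappa_bound[OF g jN(2) jN(2)] .
        hence kpos: "0 \<le> ?k" using jN(2) by (simp add: mult_le_cancel_right1)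
        have finN: "finite N" by simp
        have gi: "\<bar>g $ i\<bar> \<le> ?k * (\<Sum>j\<in>N. \<bar>g $ j\<bar>)"
        proof (cases "g $ i = 0")
          case True
          thus ?thesis using kpos by (simp add: sum_nonneg)
        next
          case False
          have "\<bar>g $ i\<bar> \<le> ?k * \<bar>g $ jN\<bar>" using kappa_bound[OF g False jN(2)] .
          also have "\<dots> \<le> ?k * (\<Sum>j\<in>N. \<bar>g $ j\<bar>)"
            by (rule mult_left_mono[OF _ kpos]) (rule member_le_sum[OF jN(1)], simp_all add: finN)
          finally show ?thesis .
        qed
        have sumeq: "(\<Sum>j\<in>N. \<bar>z $ j\<bar>) = (\<Sum>j\<in>N. \<bar>z' $ j\<bar>) + t * (\<Sum>j\<in>N. \<bar>g $ j\<bar>)"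
          by (simp add: abs_eq sum.distrib sum_distrib_left)
        have "t * \<bar>g $ i\<bar> \<le> t * (?k * (\<Sum>j\<in>N. \<bar>g $ j\<bar>))"
          using gi tpos by (simp add: mult_left_mono)
        hence "\<bar>z $ i\<bar> \<le> ?k * (\<Sum>j\<in>N. \<bar>z' $ j\<bar>) + t * (?k * (\<Sum>j\<in>N. \<bar>g $ j\<bar>))"
          using IH abs_eq[of i] by linarith
        also have "\<dots> = ?k * (\<Sum>j\<in>N. \<bar>z $ j\<bar>)" unfolding sumeq by (simp add: algebra_simps)
        finally show ?thesis .
      qed
    qed
  qed
  have "\<forall>i. \<bar>z $ i\<bar> \<le> ?k * (\<Sum>j\<in>N. \<bar>z $ j\<bar>)" using main assms(2) by blast
  thus ?thesis by (subst Max_le_iff) auto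
qed

end
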